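(* Let $L$ be a Lie algebra over a field $K$ of characteristic $\neq 2$ such that $\mathrm{HomLie}(L)$ is closed with respect to the anticommutator $\varphi * \psi = \frac12(\varphi\circ\psi+\psi\circ\varphi)$, and regard $\mathrm{HomLie}(L)$ as a Jordan algebra with this product. Then: (i) $L$ is homomorphically mapped to the Lie algebra $\mathrm{Der}(\mathrm{HomLie}(L))$ of derivations of this Jordan algebra; (ii) the automorphism group $\mathrm{Aut}(L)$ is homomorphically mapped to the automorphism group $\mathrm{Aut}(\mathrm{HomLie}(L))$ of this Jordan algebra.
   Context: A Hom-Lie structure on a Lie algebra $L$ is a linear map $\varphi: L \to L$ satisfying $[[x,y],\varphi(z)] + [[z,x],\varphi(y)] + [[y,z],\varphi(x)] = 0$ for all $x,y,z \in L$. $\mathrm{HomLie}(L)$ is the vector space of all Hom-Lie structures on $L$. *)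

theory Defs
  imports Main "HOL.Vector_Spaces"
begin

definition lie_algebra :: "('k::field \<Rightarrow> 'a::ab_group_add \<Rightarrow> 'a) \<Rightarrow> ('a \<Rightarrow> 'a \<Rightarrow> 'a) \<Rightarrow> bool" where
  "lie_algebra scale br \<longleftrightarrow> vector_space scale
     \<and> (\<forall>x. Vector_Spaces.linear scale scale (br x))
     \<and> (\<forall>y. Vector_Spaces.linear scale scale (\<lambda>x. br x y))
     \<and> (\<forall>x. br x x = 0)
     \<and> (\<forall>x y z. br x (br y z) + br y (br z x) + br z (br x y) = 0)"

definition HomLie :: "('k::field \<Rightarrow> 'a::ab_group_add \<Rightarrow> 'a) \<Rightarrow> ('a \<Rightarrow> 'a \<Rightarrow> 'a) \<Rightarrow> ('a \<Rightarrow> 'a) set" where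
  "HomLie scale br = {\<phi>. Vector_Spaces.linear scale scale \<phi> \<and>
     (\<forall>x y z. br (br x y) (\<phi> z) + br (br z x) (\<phi> y) + br (br y z) (\<phi> x) = 0)}"

definition jprod :: "('k::field \<Rightarrow> 'a::ab_group_add \<Rightarrow> 'a) \<Rightarrow> ('a \<Rightarrow> 'a) \<Rightarrow> ('a \<Rightarrow> 'a) \<Rightarrow> ('a \<Rightarrow> 'a)" where
  "jprod scale \<phi> \<psi> = (\<lambda>v. scale (inverse 2) (\<phi> (\<psi> v) + \<psi> (\<phi> v)))"

definition jordan_derivation :: "('k::field \<Rightarrow> 'a::ab_group_add \<Rightarrow> 'a) \<Rightarrow> ('a \<Rightarrow> 'a) set \<Rightarrow> (('a \<Rightarrow> 'a) \<Rightarrow> ('a \<Rightarrow> 'a)) \<Rightarrow> bool" where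
  "jordan_derivation scale J D \<longleftrightarrow>
     (\<forall>\<phi>\<in>J. D \<phi> \<in> J)
     \<and> (\<forall>\<phi>\<in>J. \<forall>\<psi>\<in>J. D (\<lambda>v. \<phi> v + \<psi> v) = (\<lambda>v. D \<phi> v + D \<psi> v))
     \<and> (\<forall>c. \<forall>\<phi>\<in>J. D (\<lambda>v. scale c (\<phi> v)) = (\<lambda>v. scale c (D \<phi> v)))
     \<and> (\<forall>\<phi>\<in>J. \<forall>\<psi>\<in>J. D (jprod scale \<phi> \<psi>) = (\<lambda>v. jprod scale (D \<phi>) \<psi> v + jprod scale \<phi> (D \<psi>) v))"

definition jordan_automorphism :: "('k::field \<Rightarrow> 'a::ab_group_add \<Rightarrow> 'a) \<Rightarrow> ('a \<Rightarrow> 'a) set \<Rightarrow> (('a \<Rightarrow> 'a) \<Rightarrow> ('a \<Rightarrow> 'a)) \<Rightarrow> bool" where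
  "jordan_automorphism scale J A \<longleftrightarrow>
     bij_betw A J J
     \<and> (\<forall>\<phi>\<in>J. \<forall>\<psi>\<in>J. A (\<lambda>v. \<phi> v + \<psi> v) = (\<lambda>v. A \<phi> v + A \<psi> v))
     \<and> (\<forall>c. \<forall>\<phi>\<in>J. A (\<lambda>v. scale c (\<phi> v)) = (\<lambda>v. scale c (A \<phi> v)))
     \<and> (\<forall>\<phi>\<in>J. \<forall>\<psi>\<in>J. A (jprod scale \<phi> \<psi>) = jprod scale (A \<phi>) (A \<psi>))"

definition lie_automorphism :: "('k::field \<Rightarrow> 'a::ab_group_add \<Rightarrow> 'a) \<Rightarrow> ('a \<Rightarrow> 'a \<Rightarrow> 'a) \<Rightarrow> ('a \<Rightarrow> 'a) \<Rightarrow> bool" where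
  "lie_automorphism scale br g \<longleftrightarrow> bij g \<and> Vector_Spaces.linear scale scale g
     \<and> (\<forall>x y. g (br x y) = br (g x) (g y))"

text \<open>The natural map x |-> [ad x, -] from L to Der(HomLie(L)).\<close>
definition theta :: "('a::ab_group_add \<Rightarrow> 'a \<Rightarrow> 'a) \<Rightarrow> 'a \<Rightarrow> ('a \<Rightarrow> 'a) \<Rightarrow> ('a \<Rightarrow> 'a)" where
  "theta br x \<phi> = (\<lambda>v. br x (\<phi> v) - \<phi> (br x v))"

definition conjug :: "('a \<Rightarrow> 'a) \<Rightarrow> ('a \<Rightarrow> 'a) \<Rightarrow> ('a \<Rightarrow> 'a)" where
  "conjug g \<phi> = g \<circ> \<phi> \<circ> inv g"

end

theory Submission
  imports Defs
begin

lemma rearr2: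
  fixes P1 P2 P3 Q X Y S :: "'a::ab_group_add"
  assumes "P1 = 0" "P2 = 0" "P3 = 0" "Q = 0" "P1 + P2 + P3 = Y + S" "Q = X + S"
  shows "X = Y"
proof -
  have "Y + S = 0" "X + S = 0" using assms by simp_all
  then show ?thesis by (metis add_right_imp_eq)
qed

lemma rearr:
  fixes X1 X2 X3 Y1 Y2 Y3 s1 s2 s3 s4 s5 s6 :: "'a::ab_group_add"
  assumes "Y1 + s1 + s2 = 0" "Y2 + s3 + s4 = 0" "Y3 + s5 + s6 = 0"
    "X1 + X2 + X3 + (s1 + s2 + s3 + s4 + s5 + s6) = 0"
  shows "X1 + X2 + X3 = Y1 + Y2 + Y3"
proof -
  have "Y1 + Y2 + Y3 + (s1 + s2 + s3 + s4 + s5 + s6) = (Y1 + s1 + s2) + (Y2 + s3 + s4) + (Y3 + s5 + s6)"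
    by (simp add: algebra_simps)
  also have "\<dots> = 0" using assms by simp
  finally have a: "Y1 + Y2 + Y3 = - (s1 + s2 + s3 + s4 + s5 + s6)" using eq_neg_iff_add_eq_0 by blast
  have b: "X1 + X2 + X3 = - (s1 + s2 + s3 + s4 + s5 + s6)" using assms(4) eq_neg_iff_add_eq_0 by blast
  show ?thesis using a b by simp
qed

locale LA =
  fixes scale :: "'k::field \<Rightarrow> 'a::ab_group_add \<Rightarrow> 'a"
    and br :: "'a \<Rightarrow> 'a \<Rightarrow> 'a"
  assumes lie: "lie_algebra scale br"
begin

lemma vs: "vector_space scale"
  using lie unfolding lie_algebra_def by blast

lemma md: "module scale"
  using vs by (simp add: vector_space_def module_def)

lemma sadd: "scale c (x + y) = scale c x + scale c y"
  using md by (rule module.scale_right_distrib)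

lemma sdiff: "scale c (x - y) = scale c x - scale c y"
  using md by (rule module.scale_right_diff_distrib)

lemma lin_add: "Vector_Spaces.linear scale scale f \<Longrightarrow> f (x + y) = f x + f y"
  by (simp add: linear_iff)

lemma lin_scale: "Vector_Spaces.linear scale scale f \<Longrightarrow> f (scale c x) = scale c (f x)"
  by (simp add: linear_iff)

lemma lin_additive: "Vector_Spaces.linear scale scale f \<Longrightarrow> additive f"
  by (simp add: additive_def lin_add)

lemma lin_diff: "Vector_Spaces.linear scale scale f \<Longrightarrow> f (x - y) = f x - f y"
  using lin_additive additive.diff by blast

lemma lin_zero: "Vector_Spaces.linear scale scale f \<Longrightarrow> f 0 = 0"
  using lin_additive additive.zero by blast

lemma lin_minus: "Vector_Spaces.linear scale scale f \<Longrightarrow> f (- x) = - f x"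
  using lin_additive additive.minus by blast

lemma linR: "Vector_Spaces.linear scale scale (br x)"
  using lie unfolding lie_algebra_def by blast

lemma linL: "Vector_Spaces.linear scale scale (\<lambda>x. br x y)"
  using lie unfolding lie_algebra_def by blast

lemma addR: "br x (y + z) = br x y + br x z" using lin_add[OF linR] .
lemma addL: "br (x + y) z = br x z + br y z" using lin_add[OF linL[of z], of x y] by simp
lemma diffR: "br x (y - z) = br x y - br x z" using lin_diff[OF linR] .
lemma diffL: "br (x - y) z = br x z - br y z" using lin_diff[OF linL[of z], of x y] by simp
lemma zeroR: "br x 0 = 0" using lin_zero[OF linR] .
lemma zeroL: "br 0 x = 0" using lin_zero[OF linL, of x] by simp
lemma sclR: "br x (scale c y) = scale c (br x y)" using lin_scale[OF linR] .
lemma sclL: "br (scale c x) y = scale c (br x y)" using lin_scale[OF linL[of y], of c x] by simp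

lemma alt: "br x x = 0" using lie unfolding lie_algebra_def by blast

lemma anti: "br y x = - br x y"
proof -
  have e: "br (x + y) (x + y) = br x x + br y x + (br x y + br y y)" by (simp only: addL addR)
  have "br y x + br x y = 0" using e by (simp add: alt)
  then show ?thesis by (simp only: eq_neg_iff_add_eq_0)
qed

lemma jacobi: "br x (br y z) + br y (br z x) + br z (br x y) = 0"
  using lie unfolding lie_algebra_def by blast

lemma der: "br x (br y z) = br (br x y) z + br y (br x z)"
proof -
  have "br y (br z x) = - br y (br x z)" using anti[of x z] lin_minus[OF linR] by simp
  moreover have "br z (br x y) = - br (br x y) z" by (rule anti)
  ultimately show ?thesis using jacobi[of x y z] by (simp add: algebra_simps)
qed

abbreviation "H \<equiv> HomLie scale br"

lemma H_lin: "\<phi> \<in> H \<Longrightarrow> Vector_Spaces.linear scale scale \<phi>"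
  by (simp add: HomLie_def)

lemma H_id: "\<phi> \<in> H \<Longrightarrow> br (br a b) (\<phi> c) + br (br c a) (\<phi> b) + br (br b c) (\<phi> a) = 0"
  by (simp add: HomLie_def)

lemma theta_lin:
  assumes "\<phi> \<in> H" shows "Vector_Spaces.linear scale scale (theta br x \<phi>)"
proof -
  have l: "Vector_Spaces.linear scale scale \<phi>" using H_lin[OF assms] .
  show ?thesis unfolding linear_iff theta_def
    using vs lin_add[OF l] lin_scale[OF l] by (simp add: addR diffR sclR sdiff algebra_simps)
qed

lemma theta_H:
  assumes ph: "\<phi> \<in> H" shows "theta br x \<phi> \<in> H"
proof -
  have l: "Vector_Spaces.linear scale scale \<phi>" using H_lin[OF ph] .
  have "br (br a b) (theta br x \<phi> c) + br (br c a) (theta br x \<phi> b) + br (br b c) (theta br x \<phi> a) = 0" for a b c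
  proof -
    have F1: "br (br (br x a) b) (\<phi> c) + br (br c (br x a)) (\<phi> b) + br (br b c) (\<phi> (br x a)) = 0"
      by (rule H_id[OF ph])
    have F2: "br (br a (br x b)) (\<phi> c) + br (br c a) (\<phi> (br x b)) + br (br (br x b) c) (\<phi> a) = 0"
      by (rule H_id[OF ph])
    have F3: "br (br a b) (\<phi> (br x c)) + br (br (br x c) a) (\<phi> b) + br (br b (br x c)) (\<phi> a) = 0"
      by (rule H_id[OF ph])
    have G: "br x (br (br a b) (\<phi> c)) + br x (br (br c a) (\<phi> b)) + br x (br (br b c) (\<phi> a)) = 0"
      using H_id[OF ph, of a b c] by (metis addR zeroR)
    have E: "br x (br (br u v) (\<phi> w)) = br (br (br x u) v) (\<phi> w) + br (br u (br x v)) (\<phi> w) + br (br u v) (br x (\<phi> w))" for u v w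
      by (simp add: der[of x "br u v"] der[of x u v] addL)
    have K: "br (br a b) (br x (\<phi> c)) + br (br b c) (br x (\<phi> a)) + br (br c a) (br x (\<phi> b))
      = br (br b c) (\<phi> (br x a)) + br (br c a) (\<phi> (br x b)) + br (br a b) (\<phi> (br x c))"
    proof (rule rearr2[OF F1 F2 F3 G, where S = "br (br c (br x a)) (\<phi> b) + br (br (br x a) b) (\<phi> c) + br (br a (br x b)) (\<phi> c) +
         br (br (br x b) c) (\<phi> a) + br (br (br x c) a) (\<phi> b) + br (br b (br x c)) (\<phi> a)"])
    qed (simp_all add: E algebra_simps)
    show ?thesis
      unfolding theta_def diffR
      using K by (simp add: algebra_simps)
  qed
  then show ?thesis using theta_lin[OF ph] by (simp add: HomLie_def)
qed

lemma theta_leib: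
  assumes p: "\<phi> \<in> H" and q: "\<psi> \<in> H"
  shows "theta br x (jprod scale \<phi> \<psi>) = (\<lambda>v. jprod scale (theta br x \<phi>) \<psi> v + jprod scale \<phi> (theta br x \<psi>) v)"
proof
  fix v
  have lp: "Vector_Spaces.linear scale scale \<phi>" using H_lin[OF p] .
  have lq: "Vector_Spaces.linear scale scale \<psi>" using H_lin[OF q] .
  let ?h = "inverse (2::'k)"
  have "theta br x (jprod scale \<phi> \<psi>) v = scale ?h (br x (\<phi> (\<psi> v) + \<psi> (\<phi> v)) - (\<phi> (\<psi> (br x v)) + \<psi> (\<phi> (br x v))))"
    by (simp add: theta_def jprod_def sclR sdiff)
  also have "\<dots> = scale ?h ((br x (\<phi> (\<psi> v)) - \<phi> (br x (\<psi> v)) + \<psi> (br x (\<phi> v) - \<phi> (br x v)))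
       + (\<phi> (br x (\<psi> v) - \<psi> (br x v)) + (br x (\<psi> (\<phi> v)) - \<psi> (br x (\<phi> v)))))"
    by (simp add: lin_diff[OF lp] lin_diff[OF lq] addR algebra_simps)
  also have "\<dots> = jprod scale (theta br x \<phi>) \<psi> v + jprod scale \<phi> (theta br x \<psi>) v"
    by (simp add: theta_def jprod_def sadd)
  finally show "theta br x (jprod scale \<phi> \<psi>) v = jprod scale (theta br x \<phi>) \<psi> v + jprod scale \<phi> (theta br x \<psi>) v" .
qed

lemma theta_der: "jordan_derivation scale H (theta br x)"
  unfolding jordan_derivation_def
proof (intro conjI ballI allI)
  fix \<phi> assume "\<phi> \<in> H" then show "theta br x \<phi> \<in> H" by (rule theta_H)
next
  fix \<phi> \<psi> assume "\<phi> \<in> H" "\<psi> \<in> H"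
  then show "theta br x (\<lambda>v. \<phi> v + \<psi> v) = (\<lambda>v. theta br x \<phi> v + theta br x \<psi> v)"
    by (simp add: theta_def addR algebra_simps)
next
  fix c \<phi> assume p: "\<phi> \<in> H"
  show "theta br x (\<lambda>v. scale c (\<phi> v)) = (\<lambda>v. scale c (theta br x \<phi> v))"
    by (simp add: theta_def sclR sdiff)
next
  fix \<phi> \<psi> assume "\<phi> \<in> H" "\<psi> \<in> H"
  then show "theta br x (jprod scale \<phi> \<psi>) = (\<lambda>v. jprod scale (theta br x \<phi>) \<psi> v + jprod scale \<phi> (theta br x \<psi>) v)"
    by (rule theta_leib)
qed

lemma theta_add: "\<phi> \<in> H \<Longrightarrow> theta br (x + y) \<phi> = (\<lambda>v. theta br x \<phi> v + theta br y \<phi> v)"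
  by (simp add: theta_def addL algebra_simps lin_add[OF H_lin])

lemma theta_scale: "\<phi> \<in> H \<Longrightarrow> theta br (scale c x) \<phi> = (\<lambda>v. scale c (theta br x \<phi> v))"
  by (simp add: theta_def sclL sdiff lin_scale[OF H_lin])

lemma theta_br: assumes p: "\<phi> \<in> H"
  shows "theta br (br x y) \<phi> = (\<lambda>v. theta br x (theta br y \<phi>) v - theta br y (theta br x \<phi>) v)"
proof
  fix v
  have l: "Vector_Spaces.linear scale scale \<phi>" using H_lin[OF p] .
  have d1: "br (br x y) w = br x (br y w) - br y (br x w)" for w
    using der[of x y w] by (simp add: algebra_simps)
  show "theta br (br x y) \<phi> v = theta br x (theta br y \<phi>) v - theta br y (theta br x \<phi>) v"
    by (simp add: theta_def d1 diffR lin_diff[OF l] algebra_simps)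
qed

lemma aut_inv: assumes "lie_automorphism scale br g" shows "lie_automorphism scale br (inv g)"
proof -
  have b: "bij g" and l: "Vector_Spaces.linear scale scale g" and h: "\<And>x y. g (br x y) = br (g x) (g y)"
    using assms by (auto simp: lie_automorphism_def)
  have i: "inj g" using b bij_is_inj by blast
  have s: "\<And>x. g (inv g x) = x" using b by (simp add: bij_is_surj surj_f_inv_f)
  have ig: "\<And>x. inv g (g x) = x" using i by simp
  have a1: "inv g (x + y) = inv g x + inv g y" for x y
    by (metis ig s lin_add[OF l])
  have a2: "inv g (scale c x) = scale c (inv g x)" for c x
    by (metis ig s lin_scale[OF l])
  have a3: "inv g (br x y) = br (inv g x) (inv g y)" for x y
    by (metis ig s h)
  show ?thesis unfolding lie_automorphism_def linear_iff
    using a1 a2 a3 vs b bij_imp_bij_inv by blast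
qed

lemma conjug_H: assumes g: "lie_automorphism scale br g" and p: "\<phi> \<in> H"
  shows "conjug g \<phi> \<in> H"
proof -
  have b: "bij g" and l: "Vector_Spaces.linear scale scale g" and h: "\<And>x y. g (br x y) = br (g x) (g y)"
    using g by (auto simp: lie_automorphism_def)
  have li: "Vector_Spaces.linear scale scale (inv g)" using aut_inv[OF g] by (simp add: lie_automorphism_def)
  have s: "\<And>x. g (inv g x) = x" using b by (simp add: bij_is_surj surj_f_inv_f)
  have lc: "Vector_Spaces.linear scale scale (conjug g \<phi>)"
    unfolding conjug_def using l li H_lin[OF p] by (metis Vector_Spaces.linear_compose)
  have "br (br a b) (conjug g \<phi> c) + br (br c a) (conjug g \<phi> b) + br (br b c) (conjug g \<phi> a) = 0" for a b c
  proof -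
    have "br (br a b) (conjug g \<phi> c) + br (br c a) (conjug g \<phi> b) + br (br b c) (conjug g \<phi> a)
      = g (br (br (inv g a) (inv g b)) (\<phi> (inv g c)) + br (br (inv g c) (inv g a)) (\<phi> (inv g b)) + br (br (inv g b) (inv g c)) (\<phi> (inv g a)))"
      by (simp add: conjug_def lin_add[OF l] h s)
    also have "\<dots> = 0" using H_id[OF p] lin_zero[OF l] by simp
    finally show ?thesis .
  qed
  then show ?thesis using lc by (simp add: HomLie_def)
qed

lemma conjug_inv: assumes g: "lie_automorphism scale br g"
  shows "conjug (inv g) (conjug g \<phi>) = \<phi>"
proof -
  have b: "bij g" using g by (simp add: lie_automorphism_def)
  have i: "inj g" using b bij_is_inj by blast
  have s: "\<And>x. g (inv g x) = x" using b by (simp add: bij_is_surj surj_f_inv_f)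
  show ?thesis unfolding conjug_def using b i s by (simp add: inv_inv_eq comp_def)
qed

lemma conjug_aut: assumes g: "lie_automorphism scale br g"
  shows "jordan_automorphism scale H (conjug g)"
proof -
  have b: "bij g" and l: "Vector_Spaces.linear scale scale g"
    using g by (auto simp: lie_automorphism_def)
  have s: "\<And>x. g (inv g x) = x" using b by (simp add: bij_is_surj surj_f_inv_f)
  have gi: "lie_automorphism scale br (inv g)" using aut_inv[OF g] .
  have ii: "inv (inv g) = g" using b by (simp add: inv_inv_eq)
  have bb: "bij_betw (conjug g) H H"
  proof (rule bij_betw_byWitness[where f'="conjug (inv g)"])
    show "\<forall>a\<in>H. conjug (inv g) (conjug g a) = a" using conjug_inv[OF g] by blast
    show "\<forall>a\<in>H. conjug g (conjug (inv g) a) = a" using conjug_inv[OF gi] ii by simp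
    show "conjug g ` H \<subseteq> H" using conjug_H[OF g] by blast
    show "conjug (inv g) ` H \<subseteq> H" using conjug_H[OF gi] by blast
  qed
  show ?thesis unfolding jordan_automorphism_def
  proof (intro conjI ballI allI bb)
    fix \<phi> \<psi> assume "\<phi> \<in> H" "\<psi> \<in> H"
    show "conjug g (\<lambda>v. \<phi> v + \<psi> v) = (\<lambda>v. conjug g \<phi> v + conjug g \<psi> v)"
      by (simp add: conjug_def comp_def lin_add[OF l])
  next
    fix c \<phi> assume "\<phi> \<in> H"
    show "conjug g (\<lambda>v. scale c (\<phi> v)) = (\<lambda>v. scale c (conjug g \<phi> v))"
      by (simp add: conjug_def comp_def lin_scale[OF l])
  next
    fix \<phi> \<psi> assume "\<phi> \<in> H" "\<psi> \<in> H"
    show "conjug g (jprod scale \<phi> \<psi>) = jprod scale (conjug g \<phi>) (conjug g \<psi>)"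
      using b by (simp add: conjug_def comp_def jprod_def lin_add[OF l] lin_scale[OF l] s bij_is_inj)
  qed
qed

lemma conjug_comp: assumes "lie_automorphism scale br g" "lie_automorphism scale br h"
  shows "conjug (g \<circ> h) \<phi> = conjug g (conjug h \<phi>)"
  using assms by (simp add: lie_automorphism_def conjug_def o_inv_distrib o_assoc)

end

theorem proposition2p6:
  fixes scale :: "'k::field \<Rightarrow> 'a::ab_group_add \<Rightarrow> 'a"
    and br :: "'a \<Rightarrow> 'a \<Rightarrow> 'a"
  assumes lie: "lie_algebra scale br"
    and char: "(2::'k) \<noteq> 0"
    and closed: "\<forall>\<phi>\<in>HomLie scale br. \<forall>\<psi>\<in>HomLie scale br. jprod scale \<phi> \<psi> \<in> HomLie scale br"
  shows "(\<forall>x. jordan_derivation scale (HomLie scale br) (theta br x))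
    \<and> (\<forall>x y. \<forall>\<phi>\<in>HomLie scale br. theta br (x + y) \<phi> = (\<lambda>v. theta br x \<phi> v + theta br y \<phi> v))
    \<and> (\<forall>c x. \<forall>\<phi>\<in>HomLie scale br. theta br (scale c x) \<phi> = (\<lambda>v. scale c (theta br x \<phi> v)))
    \<and> (\<forall>x y. \<forall>\<phi>\<in>HomLie scale br.
          theta br (br x y) \<phi> = (\<lambda>v. theta br x (theta br y \<phi>) v - theta br y (theta br x \<phi>) v))
    \<and> (\<forall>g. lie_automorphism scale br g \<longrightarrow> jordan_automorphism scale (HomLie scale br) (conjug g))
    \<and> (\<forall>g h. lie_automorphism scale br g \<longrightarrow> lie_automorphism scale br h \<longrightarrow>
          (\<forall>\<phi>\<in>HomLie scale br. conjug (g \<circ> h) \<phi> = conjug g (conjug h \<phi>)))"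
proof -
  interpret LA scale br by (rule LA.intro[OF lie])
  show ?thesis
    using theta_der theta_add theta_scale theta_br conjug_aut conjug_comp by blast
qed

end
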